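(* Let $f_0$ be a continuous probability density on $\mathbb{R}$ with $f_0(-z)=f_0(z)$ for all $z$, and let $F_0(x)=\int_{-\infty}^x f_0(z)\,dz$. For $\alpha>0,\theta>0$ let $g(\theta\mid\alpha)=\alpha f_0(\alpha\theta)$. Assume: (a) for all $0<\alpha_1<\alpha_2$, the ratio $g(\theta\mid\alpha_2)/g(\theta\mid\alpha_1)$ is strictly monotone in $\theta\in(0,\infty)$ (strict monotone likelihood ratio); (b) for all $0<\alpha_1<\alpha_2$, the function $\theta\mapsto \log\frac{g(\theta\mid\alpha_2)}{g(\theta\mid\alpha_1)}$ is convex on $(0,\infty)$. Let $X$ have density $\frac1\sigma f_0\big(\frac{x-\mu}{\sigma}\big)$, $\mu\in\mathbb{R}$, $\sigma>0$. Then: (i) for each $c>1$ the equation $$\frac{f_0\big(\frac{c}{c+1}\theta\big)}{f_0\big(\frac{c}{c-1}\theta\big)} = \frac{c+1}{c-1}$$ has a unique root $\theta=\theta(c)>0$; (ii) $\theta(c)$ is continuous in $c\in(1,\infty)$; (iii) for every $c>1$, $$\inf_{\mu\in\mathbb{R},\,\sigma>0} P_{\mu,\sigma}\big(X-c|X|\le\mu\le X+c|X|\big) = \psi(c) := F_0\Big(\frac{c}{c+1}\theta(c)\Big)+1-F_0\Big(\frac{c}{c-1}\theta(c)\Big);$$ (iv) $\psi(c)$ is continuous in $c\in(1,\infty)$. *)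

theory Defs
  imports "HOL-Analysis.Analysis"
begin

definition sym_cont_density :: "(real \<Rightarrow> real) \<Rightarrow> bool" where
  "sym_cont_density f0 \<longleftrightarrow>
     continuous_on UNIV f0 \<and> (\<forall>z. 0 \<le> f0 z) \<and>
     integrable lborel f0 \<and> integral\<^sup>L lborel f0 = 1 \<and>
     (\<forall>z. f0 (- z) = f0 z)"

definition cdf0 :: "(real \<Rightarrow> real) \<Rightarrow> real \<Rightarrow> real" where
  "cdf0 f0 x = (LINT z:{..x}|lborel. f0 z)"

definition gsc :: "(real \<Rightarrow> real) \<Rightarrow> real \<Rightarrow> real \<Rightarrow> real" where
  "gsc f0 \<alpha> \<theta> = \<alpha> * f0 (\<alpha> * \<theta>)"

definition strictly_monotone_on :: "real set \<Rightarrow> (real \<Rightarrow> real) \<Rightarrow> bool" where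
  "strictly_monotone_on A h \<longleftrightarrow>
     monotone_on A (<) (<) h \<or> monotone_on A (<) (>) h"

definition root_eq :: "(real \<Rightarrow> real) \<Rightarrow> real \<Rightarrow> real \<Rightarrow> bool" where
  "root_eq f0 c \<theta> \<longleftrightarrow>
     f0 (c / (c + 1) * \<theta>) / f0 (c / (c - 1) * \<theta>) = (c + 1) / (c - 1)"

definition theta :: "(real \<Rightarrow> real) \<Rightarrow> real \<Rightarrow> real" where
  "theta f0 c = (THE t. 0 < t \<and> root_eq f0 c t)"

definition psi :: "(real \<Rightarrow> real) \<Rightarrow> real \<Rightarrow> real" where
  "psi f0 c = cdf0 f0 (c / (c + 1) * theta f0 c) + 1 - cdf0 f0 (c / (c - 1) * theta f0 c)"

definition locscale :: "(real \<Rightarrow> real) \<Rightarrow> real \<Rightarrow> real \<Rightarrow> real measure" where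
  "locscale f0 \<mu> \<sigma> = density lborel (\<lambda>x. ennreal (f0 ((x - \<mu>) / \<sigma>) / \<sigma>))"

definition cover_prob :: "(real \<Rightarrow> real) \<Rightarrow> real \<Rightarrow> real \<Rightarrow> real \<Rightarrow> real" where
  "cover_prob f0 c \<mu> \<sigma> =
     measure (locscale f0 \<mu> \<sigma>) {x. x - c * \<bar>x\<bar> \<le> \<mu> \<and> \<mu> \<le> x + c * \<bar>x\<bar>}"

end

theory Submission
  imports Defs "HOL-Probability.Distribution_Functions"
begin


context
  fixes f0 :: "real \<Rightarrow> real"
  assumes dens: "sym_cont_density f0"
begin

lemma f0_cont: "continuous_on UNIV f0" using dens by (simp add: sym_cont_density_def)
lemma f0_nonneg: "0 \<le> f0 z" using dens by (simp add: sym_cont_density_def)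
lemma f0_int: "integrable lborel f0" using dens by (simp add: sym_cont_density_def)
lemma f0_int1: "integral\<^sup>L lborel f0 = 1" using dens by (simp add: sym_cont_density_def)
lemma f0_sym: "f0 (- z) = f0 z" using dens by (simp add: sym_cont_density_def)
lemma f0_meas[measurable]: "f0 \<in> borel_measurable borel"
  by (rule borel_measurable_continuous_onI[OF f0_cont])

definition "NN = density lborel (\<lambda>x. ennreal (f0 x))"

lemma NN_emeasure: "A \<in> sets borel \<Longrightarrow> emeasure NN A = ennreal (LINT x:A|lborel. f0 x)"
proof -
  assume A: "A \<in> sets borel"
  have "emeasure NN A = (\<integral>\<^sup>+ x. ennreal (f0 x) * indicator A x \<partial>lborel)"
    unfolding NN_def using A by (subst emeasure_density) auto
  also have "\<dots> = (\<integral>\<^sup>+ x. ennreal (indicator A x *\<^sub>R f0 x) \<partial>lborel)"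
    by (intro nn_integral_cong) (auto split: split_indicator)
  also have "\<dots> = ennreal (LINT x:A|lborel. f0 x)"
    unfolding set_lebesgue_integral_def
    by (rule nn_integral_eq_integral) (use integrable_mult_indicator[OF A[simplified sets_lborel[symmetric]] f0_int] f0_nonneg in \<open>auto split: split_indicator\<close>)
  finally show ?thesis .
qed

lemma NN_real_distribution: "real_distribution NN"
proof -
  have "emeasure NN UNIV = 1" using NN_emeasure[of UNIV] f0_int1
    by (simp add: set_lebesgue_integral_def)
  moreover have "space NN = UNIV" unfolding NN_def by simp
  ultimately have "prob_space NN" by (intro prob_spaceI) simp
  moreover have "sets NN = sets borel" unfolding NN_def by simp
  ultimately show ?thesis by (simp add: real_distribution_def real_distribution_axioms_def)
qed

interpretation NN: real_distribution NN by (rule NN_real_distribution)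

lemma NN_measure: "A \<in> sets borel \<Longrightarrow> measure NN A = (LINT x:A|lborel. f0 x)"
proof -
  assume A: "A \<in> sets borel"
  have "0 \<le> (LINT x:A|lborel. f0 x)" unfolding set_lebesgue_integral_def
    by (rule integral_nonneg_AE) (auto simp: f0_nonneg split: split_indicator)
  then show ?thesis unfolding measure_def using NN_emeasure[OF A] by simp
qed

lemma cdf0_eq: "cdf0 f0 x = cdf NN x"
  unfolding cdf0_def cdf_def by (simp add: NN_measure)

lemma NN_single: "measure NN {t} = 0"
proof -
  have "emeasure NN {t} = (\<integral>\<^sup>+ x. ennreal (f0 x) * indicator {t} x \<partial>lborel)"
    unfolding NN_def by (subst emeasure_density) auto
  also have "\<dots> = 0" by (rule nn_integral_null_set) (simp add: finite_imp_null_set_lborel)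
  finally show ?thesis by (simp add: measure_def)
qed

lemma cdf_split: "a \<le> u \<Longrightarrow> cdf NN u = cdf NN a + (LBINT y=a..u. f0 y)"
proof -
  assume au: "a \<le> u"
  show ?thesis
  proof (cases "a = u")
    case True then show ?thesis by simp
  next
    case False
    then have lt: "a < u" using au by simp
    have "measure NN {a..u} = measure NN ({a} \<union> {a<..u})"
      using au by (intro arg_cong[where f="measure NN"]) auto
    also have "\<dots> = measure NN {a} + measure NN {a<..u}"
      by (rule NN.finite_measure_Union) auto
    finally have "measure NN {a<..u} = (LBINT y=a..u. f0 y)"
      using NN_single[of a] NN_measure[of "{a..u}"] interval_integral_Icc[OF au, of f0] by simp
    then show ?thesis using NN.cdf_diff_eq[OF lt] by simp
  qed
qed

lemma cdf_deriv: "DERIV (cdf NN) x :> f0 x"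
proof -
  have "((\<lambda>u. LBINT y=(x-1)..u. f0 y) has_vector_derivative f0 x) (at x within {x-1..x+1})"
    by (rule interval_integral_FTC2) (auto intro: continuous_on_subset[OF f0_cont])
  then have "((\<lambda>u. LBINT y=(x-1)..u. f0 y) has_vector_derivative f0 x) (at x)"
    by (simp add: at_within_Icc_at)
  then have "((\<lambda>u. cdf NN (x-1) + (LBINT y=(x-1)..u. f0 y)) has_field_derivative f0 x) (at x)"
    by (auto intro!: derivative_eq_intros simp: has_real_derivative_iff_has_vector_derivative[symmetric])
  then show ?thesis
    by (rule has_field_derivative_transform_within_open[where S="{x-1<..}"]) (auto intro!: cdf_split[symmetric])
qed

lemma cdf_refl: "cdf NN (- x) = 1 - cdf NN x"
proof -
  have "emeasure NN {..-x} = (\<integral>\<^sup>+ y. ennreal (f0 y) * indicator {..-x} y \<partial>lborel)"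
    unfolding NN_def by (subst emeasure_density) auto
  also have "\<dots> = ennreal \<bar>-1\<bar> * (\<integral>\<^sup>+ y. ennreal (f0 (0 + -1 * y)) * indicator {..-x} (0 + -1 * y) \<partial>lborel)"
    by (rule nn_integral_real_affine) auto
  also have "\<dots> = (\<integral>\<^sup>+ y. ennreal (f0 y) * indicator {x..} y \<partial>lborel)"
    by (auto intro!: nn_integral_cong simp: f0_sym split: split_indicator)
  also have "\<dots> = emeasure NN {x..}"
    unfolding NN_def by (subst emeasure_density) auto
  finally have "measure NN {..-x} = measure NN {x..}" by (simp add: measure_def)
  also have "\<dots> = measure NN ({x} \<union> {x<..})"
    by (intro arg_cong[where f="measure NN"]) auto
  also have "\<dots> = measure NN {x} + measure NN {x<..}"
    by (rule NN.finite_measure_Union) auto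
  also have "measure NN {x<..} = measure NN (space NN - {..x})"
    by (intro arg_cong[where f="measure NN"]) auto
  also have "\<dots> = 1 - measure NN {..x}"
    by (rule NN.prob_compl) auto
  finally show ?thesis using NN_single[of x] by (simp add: cdf_def)
qed

end


context
  fixes f0 :: "real \<Rightarrow> real"
  assumes dens: "sym_cont_density f0"
    and mlr: "\<And>\<alpha>1 \<alpha>2. 0 < \<alpha>1 \<Longrightarrow> \<alpha>1 < \<alpha>2 \<Longrightarrow>
               strictly_monotone_on {0<..} (\<lambda>\<theta>. gsc f0 \<alpha>2 \<theta> / gsc f0 \<alpha>1 \<theta>)"
begin

lemmas nonneg = f0_nonneg[OF dens]
lemmas deriv = cdf_deriv[OF dens]

lemma f0c: "isCont f0 x"
  using f0_cont[OF dens] by (simp add: continuous_on_eq_continuous_at)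

lemma Fc: "isCont (cdf (NN f0)) x"
  by (rule DERIV_isCont[OF deriv])

lemma F_mono: "x \<le> y \<Longrightarrow> cdf (NN f0) x \<le> cdf (NN f0) y"
  using finite_borel_measure.cdf_nondecreasing[OF real_distribution.finite_borel_measure_M[OF NN_real_distribution[OF dens]]] by blast

lemma F_top: "(cdf (NN f0) \<longlongrightarrow> 1) at_top"
  using real_distribution.cdf_lim_at_top_prob[OF NN_real_distribution[OF dens]] by blast

lemma f0_pos: assumes z: "0 < z" shows "0 < f0 z"
proof (rule ccontr)
  assume "\<not> 0 < f0 z"
  then have z0: "f0 z = 0" using nonneg[of z] by simp
  let ?h = "\<lambda>\<theta>. gsc f0 2 \<theta> / gsc f0 1 \<theta>"
  have sm: "strictly_monotone_on {0<..} ?h" by (rule mlr) auto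
  have hn: "\<And>t. 0 \<le> ?h t" by (simp add: gsc_def nonneg)
  have h0: "?h (z/2) = 0" by (simp add: gsc_def z0)
  from sm show False
    unfolding strictly_monotone_on_def monotone_on_def
  proof
    assume "\<forall>x\<in>{0<..}. \<forall>y\<in>{0<..}. x < y \<longrightarrow> ?h x < ?h y"
    then have "?h (z/4) < ?h (z/2)" using z by auto
    then show False using h0 hn[of "z/4"] by linarith
  next
    assume "\<forall>x\<in>{0<..}. \<forall>y\<in>{0<..}. x < y \<longrightarrow> ?h x > ?h y"
    then have "?h (z/2) > ?h z" using z by auto
    then show False using h0 hn[of z] by linarith
  qed
qed

definition "DD c t = c/(c+1) * f0 (c/(c+1)*t) - c/(c-1) * f0 (c/(c-1)*t)"
definition "qq c t = cdf (NN f0) (c/(c+1)*t) + 1 - cdf (NN f0) (c/(c-1)*t)"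

lemma F_chain: "DERIV (\<lambda>t. cdf (NN f0) (k*t)) t :> k * f0 (k*t)"
proof -
  have "DERIV (\<lambda>t. k*t) t :> k" by (auto intro!: derivative_eq_intros)
  from DERIV_chain2[OF deriv this] show ?thesis by (simp add: mult.commute)
qed

lemma qq_deriv: "DERIV (qq c) t :> DD c t"
proof -
  have "DERIV (\<lambda>t. cdf (NN f0) (c/(c+1)*t) + 1 - cdf (NN f0) (c/(c-1)*t)) t :>
     c/(c+1) * f0 (c/(c+1)*t) + 0 - c/(c-1) * f0 (c/(c-1)*t)"
    by (intro DERIV_diff DERIV_add F_chain DERIV_const)
  then show ?thesis unfolding qq_def[abs_def] DD_def by simp
qed

lemma qq_deriv_ex: "P (DD c x) \<Longrightarrow> \<exists>y. DERIV (qq c) x :> y \<and> P y"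
  using qq_deriv by blast

lemma qq_cont: "continuous_on S (qq c)"
  by (rule continuous_on_subset[of UNIV]) (auto intro!: DERIV_continuous_on qq_deriv simp: continuous_on_eq_continuous_at[symmetric])

lemma DD_cont: "c > 1 \<Longrightarrow> continuous_on S (DD c)"
  unfolding DD_def by (intro continuous_intros continuous_on_compose2[OF f0_cont[OF dens]]) auto

lemma qq0: "qq c 0 = 1" by (simp add: qq_def)

lemma qq_le1: "c > 1 \<Longrightarrow> 0 \<le> t \<Longrightarrow> qq c t \<le> 1"
proof -
  assume c: "c > 1" and t: "0 \<le> t"
  have "c/(c+1) \<le> c/(c-1)" using c by (intro divide_left_mono) auto
  then have "c/(c+1)*t \<le> c/(c-1)*t" using t by (rule mult_right_mono)
  then show ?thesis unfolding qq_def using F_mono by force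
qed

lemma qq_top: "c > 1 \<Longrightarrow> (qq c \<longlongrightarrow> 1) at_top"
proof -
  assume c: "c > 1"
  have "((\<lambda>t. cdf (NN f0) (c/(c+1)*t)) \<longlongrightarrow> 1) at_top"
    by (rule filterlim_compose[OF F_top]) (rule filterlim_tendsto_pos_mult_at_top[OF tendsto_const _ filterlim_ident], use c in simp)
  moreover have "((\<lambda>t. cdf (NN f0) (c/(c-1)*t)) \<longlongrightarrow> 1) at_top"
    by (rule filterlim_compose[OF F_top]) (rule filterlim_tendsto_pos_mult_at_top[OF tendsto_const _ filterlim_ident], use c in simp)
  ultimately have "((\<lambda>t. cdf (NN f0) (c/(c+1)*t) + 1 - cdf (NN f0) (c/(c-1)*t)) \<longlongrightarrow> 1 + 1 - 1) at_top"
    by (intro tendsto_intros)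
  then show ?thesis by (simp add: qq_def[abs_def])
qed

lemma sign:
  assumes c: "c > 1"
  shows "\<exists>\<theta>>0. DD c \<theta> = 0 \<and> (\<forall>t. 0<t \<longrightarrow> t<\<theta> \<longrightarrow> DD c t < 0) \<and> (\<forall>t. \<theta><t \<longrightarrow> DD c t > 0)"
proof -
  define A where "A = c/(c+1)"
  define B where "B = c/(c-1)"
  have A0: "0 < A" using c by (simp add: A_def)
  have AB: "A < B" unfolding A_def B_def using c by (intro divide_strict_left_mono) auto
  define R where "R t = gsc f0 B t / gsc f0 A t" for t
  have sm: "strictly_monotone_on {0<..} R" using mlr[OF A0 AB] unfolding R_def .
  have DDe: "DD c t = A*f0(A*t) - B*f0(B*t)" for t by (simp add: DD_def A_def B_def)
  have Ap: "t>0 \<Longrightarrow> A*f0(A*t) > 0" for t using A0 f0_pos[of "A*t"] by simp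
  have Rgt: "t>0 \<Longrightarrow> (R t > 1) = (DD c t < 0)" for t
    using Ap[of t] by (simp add: R_def gsc_def DDe divide_simps)
  have Rlt: "t>0 \<Longrightarrow> (R t < 1) = (DD c t > 0)" for t
    using Ap[of t] by (simp add: R_def gsc_def DDe divide_simps)
  have Req: "t>0 \<Longrightarrow> (R t = 1) = (DD c t = 0)" for t
    using Ap[of t] A0 f0_pos[of "A*t"] by (auto simp add: R_def gsc_def DDe divide_simps)
  have ex: "\<exists>\<theta>>0. DD c \<theta> = 0"
  proof (rule ccontr)
    assume "\<not> ?thesis"
    then have nz: "\<And>t. t>0 \<Longrightarrow> DD c t \<noteq> 0" by auto
    show False
    proof (cases "\<exists>t0>0. DD c t0 > 0")
      case True
      then obtain t0 where t0: "t0>0" "DD c t0 > 0" by auto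
      have pos: "DD c s > 0" if s: "0 < s" "s \<le> t0" for s
      proof (rule ccontr)
        assume "\<not> DD c s > 0"
        then have "DD c s \<le> 0" by simp
        then obtain x where "s \<le> x" "x \<le> t0" "DD c x = 0"
          using IVT'[of "DD c" s 0 t0] t0 s DD_cont[OF c] by auto
        with nz s show False by auto
      qed
      have "qq c 0 < qq c t0"
        by (rule DERIV_pos_imp_increasing_open[OF t0(1)]) (auto intro!: qq_deriv_ex pos qq_cont)
      with qq0 qq_le1[OF c, of t0] t0 show False by simp
    next
      case False
      then have neg: "t>0 \<Longrightarrow> DD c t < 0" for t using nz[of t] by force
      have q1: "qq c 0 > qq c 1"
        by (rule DERIV_neg_imp_decreasing_open) (auto intro!: qq_deriv_ex neg qq_cont)
      have le: "qq c t \<le> qq c 1" if "t \<ge> 1" for t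
        by (rule DERIV_nonpos_imp_decreasing_open[OF that]) (auto intro!: qq_deriv_ex qq_cont less_imp_le neg)
      have "1 \<le> qq c 1"
        by (rule tendsto_le[OF trivial_limit_at_top_linorder tendsto_const qq_top[OF c]])
           (use le in \<open>auto simp: eventually_at_top_linorder\<close>)
      with q1 qq0 show False by simp
    qed
  qed
  then obtain \<theta> where th: "\<theta>>0" "DD c \<theta> = 0" by auto
  have R1: "R \<theta> = 1" using Req th by auto
  from sm show ?thesis unfolding strictly_monotone_on_def monotone_on_def
  proof
    assume inc: "\<forall>x\<in>{0<..}. \<forall>y\<in>{0<..}. x < y \<longrightarrow> R x < R y"
    have pos: "DD c t > 0" if "0<t" "t<\<theta>" for t
      using inc[rule_format, of t \<theta>] that th R1 Rlt[of t] by auto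
    have "qq c 0 < qq c \<theta>"
      by (rule DERIV_pos_imp_increasing_open[OF th(1)]) (auto intro!: qq_deriv_ex pos qq_cont)
    with qq0 qq_le1[OF c, of \<theta>] th show ?thesis by simp
  next
    assume dec: "\<forall>x\<in>{0<..}. \<forall>y\<in>{0<..}. x < y \<longrightarrow> R x > R y"
    have "DD c t < 0" if "0<t" "t<\<theta>" for t
      using dec[rule_format, of t \<theta>] that th R1 Rgt[of t] by auto
    moreover have "DD c t > 0" if "\<theta><t" for t
      using dec[rule_format, of \<theta> t] that th R1 Rlt[of t] by auto
    ultimately show ?thesis using th by blast
  qed
qed

lemma root_iff: "c>1 \<Longrightarrow> t>0 \<Longrightarrow> root_eq f0 c t \<longleftrightarrow> DD c t = 0"
proof -
  assume c: "c>1" and t: "t>0"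
  have p: "f0 (c/(c-1)*t) > 0" using c t by (intro f0_pos) simp
  have "root_eq f0 c t \<longleftrightarrow> f0 (c/(c+1)*t) * (c-1) = (c+1) * f0 (c/(c-1)*t)"
    unfolding root_eq_def using p c by (simp add: divide_simps)
  also have "\<dots> \<longleftrightarrow> DD c t = 0"
  proof -
    have e: "DD c t = c*(f0 (c/(c+1)*t) * (c-1) - (c+1) * f0 (c/(c-1)*t))/((c+1)*(c-1))"
      using c unfolding DD_def by (simp add: field_simps)
    show ?thesis unfolding e using c by simp
  qed
  finally show ?thesis .
qed

lemma theta_spec:
  assumes c: "c > 1"
  shows "0 < theta f0 c \<and> DD c (theta f0 c) = 0 \<and> (\<forall>t. 0<t \<longrightarrow> t<theta f0 c \<longrightarrow> DD c t < 0)
     \<and> (\<forall>t. theta f0 c<t \<longrightarrow> DD c t > 0)"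
proof -
  obtain \<theta> where th: "\<theta>>0" "DD c \<theta> = 0" "\<forall>t. 0<t \<longrightarrow> t<\<theta> \<longrightarrow> DD c t < 0" "\<forall>t. \<theta><t \<longrightarrow> DD c t > 0"
    using sign[OF c] by blast
  have "theta f0 c = \<theta>" unfolding theta_def
  proof (rule the_equality)
    show "0 < \<theta> \<and> root_eq f0 c \<theta>" using th root_iff[OF c] by auto
  next
    fix t assume "0 < t \<and> root_eq f0 c t"
    then have "0<t" "DD c t = 0" using root_iff[OF c] by auto
    then show "t = \<theta>" using th by (metis less_irrefl linorder_neqE_linordered_idom)
  qed
  then show ?thesis using th by simp
qed

lemma unique_root: "c>1 \<Longrightarrow> \<exists>!t. 0 < t \<and> root_eq f0 c t"
proof -
  assume c: "c>1"
  obtain \<theta> where th: "\<theta>>0" "DD c \<theta> = 0" "\<forall>t. 0<t \<longrightarrow> t<\<theta> \<longrightarrow> DD c t < 0" "\<forall>t. \<theta><t \<longrightarrow> DD c t > 0"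
    using sign[OF c] by blast
  show ?thesis
  proof (rule ex1I[of _ \<theta>])
    show "0 < \<theta> \<and> root_eq f0 c \<theta>" using th root_iff[OF c] by auto
  next
    fix t assume "0 < t \<and> root_eq f0 c t"
    then have "0<t" "DD c t = 0" using root_iff[OF c] by auto
    then show "t = \<theta>" using th by (metis less_irrefl linorder_neqE_linordered_idom)
  qed
qed

lemma qq_min: assumes c: "c>1" and t: "0 \<le> t" shows "qq c (theta f0 c) \<le> qq c t"
proof (cases "t \<le> theta f0 c")
  case True
  show ?thesis
    using theta_spec[OF c] t
    by (intro DERIV_nonpos_imp_decreasing_open[OF True]) (auto intro!: qq_deriv_ex qq_cont less_imp_le)
next
  case False
  then have le: "theta f0 c \<le> t" by simp
  show ?thesis
    using theta_spec[OF c]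
    by (intro DERIV_nonneg_imp_increasing_open[OF le]) (auto intro!: qq_deriv_ex qq_cont less_imp_le)
qed

lemma DD_tend: "c0 > 1 \<Longrightarrow> ((\<lambda>c. DD c y) \<longlongrightarrow> DD c0 y) (at c0)"
  unfolding DD_def by (intro tendsto_intros isCont_tendsto_compose[OF f0c]) auto

lemma theta_isCont: assumes c0: "c0 > 1" shows "isCont (theta f0) c0"
proof -
  have ev1: "eventually (\<lambda>c. c > 1) (at c0)"
    using order_tendstoD(1)[OF tendsto_ident_at c0] .
  show ?thesis unfolding continuous_at
  proof (rule order_tendstoI)
    fix y assume y: "y < theta f0 c0"
    show "eventually (\<lambda>c. y < theta f0 c) (at c0)"
    proof (cases "y \<le> 0")
      case True
      show ?thesis using ev1 by eventually_elim (use True theta_spec in force)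
    next
      case False
      then have "DD c0 y < 0" using theta_spec[OF c0] y by auto
      then have "eventually (\<lambda>c. DD c y < 0) (at c0)" by (rule order_tendstoD(2)[OF DD_tend[OF c0]])
      then show ?thesis using ev1
      proof eventually_elim
        case (elim c)
        show ?case
        proof (rule ccontr)
          assume "\<not> y < theta f0 c"
          then have "theta f0 c = y \<or> theta f0 c < y" by auto
          then show False using theta_spec[OF elim(2)] elim(1) by auto
        qed
      qed
    qed
  next
    fix y assume y: "y > theta f0 c0"
    then have yp: "y > 0" using theta_spec[OF c0] by auto
    have "DD c0 y > 0" using theta_spec[OF c0] y by auto
    then have "eventually (\<lambda>c. DD c y > 0) (at c0)" by (rule order_tendstoD(1)[OF DD_tend[OF c0]])
    then show "eventually (\<lambda>c. theta f0 c < y) (at c0)" using ev1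
    proof eventually_elim
      case (elim c)
      show ?case
      proof (rule ccontr)
        assume "\<not> theta f0 c < y"
        then have "theta f0 c = y \<or> y < theta f0 c" by auto
        then show False using theta_spec[OF elim(2)] elim(1) yp by auto
      qed
    qed
  qed
qed

lemma theta_cont: "continuous_on {1<..} (theta f0)"
  by (intro continuous_at_imp_continuous_on ballI theta_isCont) auto

lemma psi_alt: "psi f0 = (\<lambda>c. cdf (NN f0) (c/(c+1)*theta f0 c) + 1 - cdf (NN f0) (c/(c-1)*theta f0 c))"
  unfolding psi_def[abs_def] cdf0_eq[OF dens] ..

lemma psi_cont: "continuous_on {1<..} (psi f0)"
proof (intro continuous_at_imp_continuous_on ballI)
  fix c0 :: real assume "c0 \<in> {1<..}"
  then have c0: "c0 > 1" by simp
  have th: "(theta f0 \<longlongrightarrow> theta f0 c0) (at c0)" using theta_isCont[OF c0] by (simp add: continuous_at)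
  show "isCont (psi f0) c0" unfolding continuous_at psi_alt
    by (intro tendsto_intros isCont_tendsto_compose[OF Fc] th) (use c0 in auto)
qed

lemma psi_qq: "psi f0 c = qq c (theta f0 c)"
  by (simp add: psi_alt qq_def)

end


lemma set_pos:
  fixes c n z :: real
  assumes c: "c>1" and n: "n>0"
  shows "(\<bar>z\<bar> \<le> c*\<bar>z-n\<bar>) \<longleftrightarrow> (z \<le> c/(c+1)*n \<or> c/(c-1)*n \<le> z)"
proof -
  have e1: "(z \<le> c/(c+1)*n) \<longleftrightarrow> c*z + z \<le> c*n" using c by (simp add: field_simps)
  have e2: "(c/(c-1)*n \<le> z) \<longleftrightarrow> c*n \<le> c*z - z" using c by (simp add: field_simps)
  have cn: "c*n > 0" using c n by simp
  consider "n \<le> z" | "0 \<le> z" "z < n" | "z < 0" by linarith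
  then show ?thesis
  proof cases
    case 1
    have "c*n \<le> c*z" using 1 c by (intro mult_left_mono) auto
    moreover have "\<bar>z\<bar> = z" "\<bar>z-n\<bar> = z-n" using 1 n by auto
    ultimately show ?thesis unfolding e1 e2 using 1 n by (simp add: algebra_simps)
  next
    case 2
    have "c*z < c*n" using 2 c by (intro mult_strict_left_mono) auto
    moreover have "\<bar>z\<bar> = z" "\<bar>z-n\<bar> = n-z" using 2 n by auto
    ultimately show ?thesis unfolding e1 e2 using 2 n by (simp add: algebra_simps)
  next
    case 3
    have h: "c*z \<le> 1*z" using 3 c by (intro mult_right_mono_neg) auto
    have ab: "\<bar>z\<bar> = -z" "\<bar>z-n\<bar> = n-z" using 3 n by auto
    have d: "c*(n-z) = c*n - c*z" by (simp add: algebra_simps)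
    have L: "\<bar>z\<bar> \<le> c*\<bar>z-n\<bar>" unfolding ab d using h cn by linarith
    have R: "c*z + z \<le> c*n" using h cn 3 by linarith
    show ?thesis unfolding e1 using L R by simp
  qed
qed

context
  fixes f0 :: "real \<Rightarrow> real"
  assumes dens: "sym_cont_density f0"
    and mlr: "\<And>\<alpha>1 \<alpha>2. 0 < \<alpha>1 \<Longrightarrow> \<alpha>1 < \<alpha>2 \<Longrightarrow>
               strictly_monotone_on {0<..} (\<lambda>\<theta>. gsc f0 \<alpha>2 \<theta> / gsc f0 \<alpha>1 \<theta>)"
begin

lemmas [measurable] = f0_meas[OF dens]

interpretation NN: real_distribution "NN f0" by (rule NN_real_distribution[OF dens])

lemma NN_Ici: "measure (NN f0) {x..} = 1 - cdf (NN f0) x"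
proof -
  have "measure (NN f0) {x..} = measure (NN f0) ({x} \<union> {x<..})"
    by (intro arg_cong[where f="measure (NN f0)"]) auto
  also have "\<dots> = measure (NN f0) {x} + measure (NN f0) {x<..}"
    by (rule NN.finite_measure_Union) auto
  also have "measure (NN f0) {x<..} = measure (NN f0) (space (NN f0) - {..x})"
    by (intro arg_cong[where f="measure (NN f0)"]) auto
  also have "\<dots> = 1 - measure (NN f0) {..x}"
    by (rule NN.prob_compl) auto
  finally show ?thesis using NN_single[OF dens, of x] by (simp add: cdf_def)
qed

lemma closed_T: "closed {z::real. \<bar>z\<bar> \<le> c*\<bar>z + m\<bar>}"
  by (intro closed_Collect_le continuous_intros)

lemma cover_NN:
  assumes s: "\<sigma> > 0"
  shows "cover_prob f0 c \<mu> \<sigma> = measure (NN f0) {z. \<bar>z\<bar> \<le> c*\<bar>z + \<mu>/\<sigma>\<bar>}"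
proof -
  define S where "S = {x. x - c * \<bar>x\<bar> \<le> \<mu> \<and> \<mu> \<le> x + c * \<bar>x\<bar>}"
  define T where "T = {z. \<bar>z\<bar> \<le> c*\<bar>z + \<mu>/\<sigma>\<bar>}"
  have "closed S" unfolding S_def Collect_conj_eq
    by (intro closed_Int closed_Collect_le continuous_intros)
  then have Sb[measurable]: "S \<in> sets borel" by (rule borel_closed)
  have Tb[measurable]: "T \<in> sets borel" unfolding T_def by (rule borel_closed[OF closed_T])
  have mem: "(\<mu> + \<sigma> * z \<in> S) = (z \<in> T)" for z
  proof -
    define m where "m = \<mu>/\<sigma>"
    have mu: "\<mu> = \<sigma> * m" using s by (simp add: m_def)
    have a: "\<bar>\<sigma> * m + \<sigma> * z\<bar> = \<sigma> * \<bar>z + m\<bar>" using s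
      by (simp add: abs_mult distrib_left[symmetric] add.commute)
    have "(\<mu> + \<sigma> * z \<in> S) = (\<sigma>*m + \<sigma>*z - c*\<bar>\<sigma>*m+\<sigma>*z\<bar> \<le> \<sigma>*m \<and> \<sigma>*m \<le> \<sigma>*m+\<sigma>*z + c*\<bar>\<sigma>*m+\<sigma>*z\<bar>)"
      by (simp add: S_def mu)
    also have "\<dots> = (\<sigma> * z \<le> c * (\<sigma> * \<bar>z + m\<bar>) \<and> - (\<sigma> * z) \<le> c * (\<sigma> * \<bar>z + m\<bar>))"
      unfolding a by auto
    also have "\<dots> = (\<sigma> * z \<le> \<sigma> * (c * \<bar>z + m\<bar>) \<and> \<sigma> * (- z) \<le> \<sigma> * (c * \<bar>z + m\<bar>))"
      by (simp add: algebra_simps)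
    also have "\<dots> = (z \<le> c * \<bar>z + m\<bar> \<and> - z \<le> c * \<bar>z + m\<bar>)"
      using s mult_le_cancel_left_pos[OF s, of "-z" "c * \<bar>z + m\<bar>"] by simp
    also have "\<dots> = (z \<in> T)" unfolding T_def m_def by auto
    finally show ?thesis .
  qed
  have "emeasure (locscale f0 \<mu> \<sigma>) S = (\<integral>\<^sup>+ x. ennreal (f0 ((x - \<mu>) / \<sigma>) / \<sigma>) * indicator S x \<partial>lborel)"
    unfolding locscale_def by (subst emeasure_density) auto
  also have "\<dots> = ennreal \<bar>\<sigma>\<bar> * (\<integral>\<^sup>+ z. ennreal (f0 ((\<mu> + \<sigma> * z - \<mu>) / \<sigma>) / \<sigma>) * indicator S (\<mu> + \<sigma> * z) \<partial>lborel)"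
    by (rule nn_integral_real_affine) (use s in auto)
  also have "\<dots> = (\<integral>\<^sup>+ z. ennreal \<sigma> * (ennreal (f0 ((\<mu> + \<sigma> * z - \<mu>) / \<sigma>) / \<sigma>) * indicator S (\<mu> + \<sigma> * z)) \<partial>lborel)"
    using s by (subst nn_integral_cmult) auto
  also have "\<dots> = (\<integral>\<^sup>+ z. ennreal (f0 z) * indicator T z \<partial>lborel)"
  proof (intro nn_integral_cong)
    fix z
    have "ennreal \<sigma> * ennreal (f0 z / \<sigma>) = ennreal (f0 z)"
      using s f0_nonneg[OF dens, of z] by (simp add: ennreal_mult[symmetric])
    then show "ennreal \<sigma> * (ennreal (f0 ((\<mu> + \<sigma> * z - \<mu>) / \<sigma>) / \<sigma>) * indicator S (\<mu> + \<sigma> * z)) =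
          ennreal (f0 z) * indicator T z"
      using s mem[of z] by (auto simp: indicator_def mult.assoc[symmetric])
  qed
  also have "\<dots> = emeasure (NN f0) T"
    unfolding NN_def[OF dens] by (subst emeasure_density) auto
  finally show ?thesis unfolding cover_prob_def measure_def S_def[symmetric] T_def by simp
qed

lemma cover_val:
  assumes s: "\<sigma> > 0" and c: "c > 1"
  shows "cover_prob f0 c \<mu> \<sigma> = qq f0 c \<bar>\<mu>/\<sigma>\<bar>"
proof -
  define m where "m = \<mu>/\<sigma>"
  have cp: "cover_prob f0 c \<mu> \<sigma> = measure (NN f0) {z. \<bar>z\<bar> \<le> c*\<bar>z + m\<bar>}"
    using cover_NN[OF s] by (simp add: m_def)
  have AB: "c/(c+1) < c/(c-1)" using c by (intro divide_strict_left_mono) auto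
  consider "m = 0" | "m < 0" | "m > 0" by linarith
  then show ?thesis
  proof cases
    case 1
    have "{z. \<bar>z\<bar> \<le> c*\<bar>z + m\<bar>} = space (NN f0)"
    proof -
      have "\<bar>z\<bar> \<le> c*\<bar>z\<bar>" for z :: real using c mult_right_mono[of 1 c "\<bar>z\<bar>"] by simp
      then show ?thesis using 1 by auto
    qed
    then show ?thesis using cp 1 NN.prob_space by (simp add: m_def[symmetric] qq0[OF dens mlr])
  next
    case 2
    define n where "n = -m"
    have n: "n > 0" using 2 by (simp add: n_def)
    have "{z. \<bar>z\<bar> \<le> c*\<bar>z + m\<bar>} = {..c/(c+1)*n} \<union> {c/(c-1)*n..}"
      using set_pos[OF c n] by (auto simp: n_def)
    moreover have "measure (NN f0) ({..c/(c+1)*n} \<union> {c/(c-1)*n..}) = measure (NN f0) {..c/(c+1)*n} + measure (NN f0) {c/(c-1)*n..}"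
    proof (rule NN.finite_measure_Union)
      show "{..c/(c+1)*n} \<inter> {c/(c-1)*n..} = {}" using mult_strict_right_mono[OF AB n] by auto
    qed auto
    ultimately have "cover_prob f0 c \<mu> \<sigma> = cdf (NN f0) (c/(c+1)*n) + (1 - cdf (NN f0) (c/(c-1)*n))"
      using cp NN_Ici[of "c/(c-1)*n"] by (simp add: cdf_def)
    moreover have "\<bar>\<mu>/\<sigma>\<bar> = n"
    proof -
      have "\<mu>/\<sigma> < 0" using 2 by (simp add: m_def)
      then show ?thesis unfolding n_def m_def by (rule abs_of_neg)
    qed
    ultimately show ?thesis by (simp add: qq_def[OF dens mlr])
  next
    case 3
    have "{z. \<bar>z\<bar> \<le> c*\<bar>z + m\<bar>} = {..-(c/(c-1)*m)} \<union> {-(c/(c+1)*m)..}"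
    proof -
      have "(\<bar>z\<bar> \<le> c*\<bar>z + m\<bar>) \<longleftrightarrow> (z \<le> -(c/(c-1)*m) \<or> -(c/(c+1)*m) \<le> z)" for z
        using set_pos[OF c 3, of "-z"] by (auto simp: abs_minus_commute algebra_simps)
      then show ?thesis by auto
    qed
    moreover have "measure (NN f0) ({..-(c/(c-1)*m)} \<union> {-(c/(c+1)*m)..}) = measure (NN f0) {..-(c/(c-1)*m)} + measure (NN f0) {-(c/(c+1)*m)..}"
    proof (rule NN.finite_measure_Union)
      show "{..-(c/(c-1)*m)} \<inter> {-(c/(c+1)*m)..} = {}" using mult_strict_right_mono[OF AB 3] by auto
    qed auto
    moreover have "measure (NN f0) {..-(c/(c-1)*m)} = 1 - cdf (NN f0) (c/(c-1)*m)"
      using cdf_refl[OF dens, of "c/(c-1)*m"] by (simp add: cdf_def)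
    moreover have "measure (NN f0) {-(c/(c+1)*m)..} = cdf (NN f0) (c/(c+1)*m)"
      using cdf_refl[OF dens, of "c/(c+1)*m"] NN_Ici[of "-(c/(c+1)*m)"] by simp
    ultimately have "cover_prob f0 c \<mu> \<sigma> = (1 - cdf (NN f0) (c/(c-1)*m)) + cdf (NN f0) (c/(c+1)*m)"
      using cp by simp
    moreover have "\<bar>\<mu>/\<sigma>\<bar> = m"
    proof -
      have "\<mu>/\<sigma> > 0" using 3 by (simp add: m_def)
      then show ?thesis unfolding m_def by (rule abs_of_pos)
    qed
    ultimately show ?thesis by (simp add: qq_def[OF dens mlr])
  qed
qed

lemma inf_eq:
  assumes c: "c > 1"
  shows "(INF p \<in> UNIV \<times> {0<..}. cover_prob f0 c (fst p) (snd p)) = psi f0 c"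
proof -
  let ?X = "(\<lambda>p. cover_prob f0 c (fst p) (snd p)) ` (UNIV \<times> {0<..})"
  have mem: "qq f0 c (theta f0 c) \<in> ?X"
    using cover_val[of 1 c "- theta f0 c"] c theta_spec[OF dens mlr c]
    by (intro image_eqI[where x="(- theta f0 c, 1)"]) auto
  have lb: "qq f0 c (theta f0 c) \<le> x" if "x \<in> ?X" for x
  proof -
    from that obtain \<mu> \<sigma> where "\<sigma> > 0" "x = cover_prob f0 c \<mu> \<sigma>" by auto
    then show ?thesis using cover_val c qq_min[OF dens mlr c] by simp
  qed
  have "Inf ?X = qq f0 c (theta f0 c)" by (rule cInf_eq_minimum[OF mem lb])
  then show ?thesis using psi_qq[OF dens mlr, of c] by simp
qed

end


theorem theorem3p2:
  fixes f0 :: "real \<Rightarrow> real"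
  assumes dens: "sym_cont_density f0"
    and mlr: "\<And>\<alpha>1 \<alpha>2. 0 < \<alpha>1 \<Longrightarrow> \<alpha>1 < \<alpha>2 \<Longrightarrow>
               strictly_monotone_on {0<..} (\<lambda>\<theta>. gsc f0 \<alpha>2 \<theta> / gsc f0 \<alpha>1 \<theta>)"
    and cvx: "\<And>\<alpha>1 \<alpha>2. 0 < \<alpha>1 \<Longrightarrow> \<alpha>1 < \<alpha>2 \<Longrightarrow>
               convex_on {0<..} (\<lambda>\<theta>. ln (gsc f0 \<alpha>2 \<theta> / gsc f0 \<alpha>1 \<theta>))"
  shows "(\<forall>c>1. \<exists>!t. 0 < t \<and> root_eq f0 c t)
       \<and> continuous_on {1<..} (theta f0)
       \<and> (\<forall>c>1. (INF p \<in> UNIV \<times> {0<..}. cover_prob f0 c (fst p) (snd p)) = psi f0 c)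
       \<and> continuous_on {1<..} (psi f0)"
  using unique_root[OF dens mlr] theta_cont[OF dens mlr] inf_eq[OF dens mlr] psi_cont[OF dens mlr]
  by blast

end
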